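(* For $\mu_1,\mu_2\in\mathbb{C}$, the function $$\phi^B_{\mu_1,\mu_2}=\Big[\prod_{r=1}^n(z_r^{1/2}-z_r^{-1/2})^{\mu_1}\Big]\prod_{1\le i<j\le n}(z_i+z_i^{-1}-z_j-z_j^{-1})^{\mu_2}$$ (on any domain where the factors are nonzero and branches are fixed) satisfies $$\sum_{r=1}^n(z_r\partial_{z_r})^2(\phi^B_{\mu_1,\mu_2})+\Big[\mu_1(1-\mu_1)\sum_{r=1}^n\frac{z_r}{(z_r-1)^2}+2\mu_2(1-\mu_2)\Big(\sum_{1\le i<j\le n}\frac{z_iz_j}{(z_i-z_j)^2}+\sum_{1\le i<j\le n}\frac{z_iz_j}{(z_iz_j-1)^2}\Big)\Big]\phi^B_{\mu_1,\mu_2}$$ $$=\Big(\frac{n\mu_1^2}{4}+\frac{n(n-1)}{2}\mu_1\mu_2+\frac{n(n-1)(2n-1)\mu_2^2}{6}\Big)\phi^B_{\mu_1,\mu_2}.$$ *)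

theory Defs
  imports "HOL-Analysis.Analysis"
begin

text \<open>Points of C^n are vectors indexed by a finite linearly ordered type 'n (n = CARD('n)).\<close>

definition vupd :: "'a^'n \<Rightarrow> 'n \<Rightarrow> 'a \<Rightarrow> 'a^'n" where
  "vupd z r t = (\<chi> k. if k = r then t else z $ k)"

definition pdiff :: "'n \<Rightarrow> (complex^'n \<Rightarrow> complex) \<Rightarrow> complex^'n \<Rightarrow> complex" where
  "pdiff r F z = deriv (\<lambda>t. F (vupd z r t)) (z $ r)"

definition euler_op :: "'n \<Rightarrow> (complex^'n \<Rightarrow> complex) \<Rightarrow> complex^'n \<Rightarrow> complex" where
  "euler_op r F z = z $ r * pdiff r F z"

text \<open>Power with a fixed branch: w^mu = exp(mu * L) where L is the chosen logarithm of w.\<close>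

definition branch_pow :: "complex \<Rightarrow> complex \<Rightarrow> complex" where
  "branch_pow L mu = exp (mu * L)"

end

theory Submission
  imports Defs
begin

lemma PS:
  fixes G :: "'n::{finite,linorder} \<Rightarrow> 'n \<Rightarrow> 'b::comm_monoid_add"
  shows "(\<Sum>(i,j)\<in>{(i,j). i<j}. G i j) = (\<Sum>i\<in>UNIV. \<Sum>j\<in>UNIV. if i < j then G i j else 0)"
proof -
  have "(\<Sum>i\<in>UNIV. \<Sum>j\<in>UNIV. if i < j then G i j else 0)
      = (\<Sum>(i,j)\<in>UNIV\<times>UNIV. if i < j then G i j else 0)" by (rule sum.cartesian_product)
  also have "\<dots> = (\<Sum>p\<in>UNIV. if fst p < snd p then G (fst p) (snd p) else 0)"
    by (simp add: case_prod_unfold)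
  also have "\<dots> = (\<Sum>p\<in>{p\<in>UNIV. fst p < snd p}. G (fst p) (snd p))"
    using sum.inter_filter[of "UNIV::('n\<times>'n) set" "\<lambda>p. G (fst p) (snd p)" "\<lambda>p. fst p < snd p"] by simp
  also have "{p\<in>UNIV. fst p < snd p} = {(i,j). i<j}" by auto
  finally show ?thesis by (simp add: case_prod_unfold)
qed

lemma if_add0: "(if c then a else 0) + (if c then b else 0) = (if c then a + b else (0::'b::comm_monoid_add))"
  by simp

lemma sum_if_cond: "(\<Sum>j\<in>A. if c then f j else 0) = (if c then (\<Sum>j\<in>A. f j) else (0::'b::comm_monoid_add))"
  by simp

lemma ORD:
  fixes F :: "'n::{finite,linorder} \<Rightarrow> 'n \<Rightarrow> 'b::comm_monoid_add"
  shows "(\<Sum>i\<in>UNIV. \<Sum>j\<in>UNIV. if i \<noteq> j then F i j else 0)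
       = (\<Sum>i\<in>UNIV. \<Sum>j\<in>UNIV. if i < j then F i j + F j i else 0)"
proof -
  have "(\<Sum>i\<in>UNIV. \<Sum>j\<in>UNIV. if i \<noteq> j then F i j else 0)
      = (\<Sum>i\<in>UNIV. \<Sum>j\<in>UNIV. (if i < j then F i j else 0) + (if j < i then F i j else 0))"
    by (intro sum.cong refl) (cases rule: linorder_cases, auto)
  also have "\<dots> = (\<Sum>i\<in>UNIV. \<Sum>j\<in>UNIV. if i < j then F i j else 0)
      + (\<Sum>i\<in>UNIV. \<Sum>j\<in>UNIV. if j < i then F i j else 0)"
    by (simp add: sum.distrib)
  also have "(\<Sum>i\<in>UNIV. \<Sum>j\<in>UNIV. if j < i then F i j else 0)
      = (\<Sum>j\<in>UNIV. \<Sum>i\<in>UNIV. if j < i then F i j else 0)" by (rule sum.swap)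
  also have "(\<Sum>i\<in>UNIV. \<Sum>j\<in>UNIV. if i < j then F i j else 0) + (\<Sum>j\<in>UNIV. \<Sum>i\<in>UNIV. if j < i then F i j else 0)
      = (\<Sum>i\<in>UNIV. \<Sum>j\<in>UNIV. if i < j then F i j + F j i else 0)"
    by (simp add: sum.distrib[symmetric] if_add0)
  finally show ?thesis .
qed

definition cc :: "'n \<Rightarrow> 'n \<Rightarrow> 'n \<Rightarrow> complex" where
  "cc r i j = (if i = r then 1 else 0) - (if j = r then 1 else 0)"

lemma cc_sum:
  fixes \<Phi> :: "'n::{finite,linorder} \<Rightarrow> 'n \<Rightarrow> complex \<Rightarrow> 'b::comm_monoid_add"
  assumes "\<And>i j. \<Phi> i j 0 = 0"
  shows "(\<Sum>(i,j)\<in>{(i,j). i<j}. \<Phi> i j (cc r i j))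
       = (\<Sum>j\<in>UNIV. if r < j then \<Phi> r j 1 else 0) + (\<Sum>i\<in>UNIV. if i < r then \<Phi> i r (-1) else 0)"
proof -
  have "(\<Sum>(i,j)\<in>{(i,j). i<j}. \<Phi> i j (cc r i j))
      = (\<Sum>i\<in>UNIV. \<Sum>j\<in>UNIV. if i < j then \<Phi> i j (cc r i j) else 0)" by (rule PS)
  also have "\<dots> = (\<Sum>i\<in>UNIV. \<Sum>j\<in>UNIV. (if i = r then (if r < j then \<Phi> r j 1 else 0) else 0)
          + (if j = r then (if i < r then \<Phi> i r (-1) else 0) else 0))"
    by (intro sum.cong refl) (auto simp: cc_def assms)
  also have "\<dots> = (\<Sum>j\<in>UNIV. if r < j then \<Phi> r j 1 else 0) + (\<Sum>i\<in>UNIV. if i < r then \<Phi> i r (-1) else 0)"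
    by (simp add: sum.distrib sum_if_cond sum.delta')
  finally show ?thesis .
qed

lemma frac2: fixes N1 N2 D1 D2 R :: complex
  assumes "D1 \<noteq> 0" "D2 \<noteq> 0" "N1*D2 + N2*D1 = R*D1*D2"
  shows "N1/D1 + N2/D2 = R"
  using assms by (simp add: field_simps)

lemma frac3: fixes N1 N2 N3 D1 D2 D3 R :: complex
  assumes "D1 \<noteq> 0" "D2 \<noteq> 0" "D3 \<noteq> 0" "N1*D2*D3 + N2*D1*D3 + N3*D1*D2 = R*D1*D2*D3"
  shows "N1/D1 + N2/D2 + N3/D3 = R"
  using assms by (simp add: field_simps)

lemma frac_1_2: fixes N1 N2 N3 D1 D2 D3 :: complex
  assumes "D1 \<noteq> 0" "D2 \<noteq> 0" "D3 \<noteq> 0" "N1*D2*D3 = N2*D1*D3 + N3*D1*D2"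
  shows "N1/D1 = N2/D2 + N3/D3"
  using assms by (simp add: field_simps)

lemma t1:
  fixes a b c :: complex assumes "a \<noteq> b" "a \<noteq> c" "b \<noteq> c"
  shows "(a^2 - 4) / ((a - b) * (a - c)) + (b^2 - 4) / ((b - c) * (b - a)) + (c^2 - 4) / ((c - a) * (c - b)) = 1"
  apply (rule frac3)
  subgoal using assms by simp
  subgoal using assms by simp
  subgoal using assms by simp
  subgoal by algebra
  done

lemma t2:
  fixes a :: complex assumes "a \<noteq> 1"
  shows "((a + 1) / (2 * (a - 1)))^2 = 1/4 + a / (a - 1)^2"
  unfolding power_divide by (rule frac_1_2) (use assms in auto, algebra)

lemma frac_Q: fixes N1 N3 N4 D1 D3 D4 :: complex
  assumes "D1 \<noteq> 0" "D3 \<noteq> 0" "D4 \<noteq> 0" "N1*D3*D4 = (2*(N3*D4 + N4*D3) + D3*D4)*D1"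
  shows "N1/D1 = 2*(N3/D3 + N4/D4) + 1"
  using assms by (simp add: field_simps)

lemma pw_Q:
  fixes a b :: complex assumes "a \<noteq> 0" "b \<noteq> 0" "a + inverse a \<noteq> b + inverse b"
  shows "(a - inverse a)^2 / ((a + inverse a) - (b + inverse b))^2
       + (b - inverse b)^2 / ((b + inverse b) - (a + inverse a))^2
     = 2 * (a * b / (a - b)^2 + a * b / (a * b - 1)^2) + 1"
proof -
  have ab: "a \<noteq> b" proof assume "a = b" thus False using assms(3) by simp qed
  have ab1: "a * b \<noteq> 1"
  proof
    assume h: "a * b = 1" hence "b = inverse a" using assms by (simp add: field_simps)
    moreover have "a = inverse b" using h assms by (simp add: field_simps)
    ultimately show False using assms(3) by simp
  qed
  have sq: "((b + inverse b) - (a + inverse a))^2 = ((a + inverse a) - (b + inverse b))^2"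
    by (simp add: power2_commute)
  have ia: "a * inverse a = 1" "b * inverse b = 1" using assms by auto
  show ?thesis unfolding sq add_divide_distrib[symmetric]
    apply (rule frac_Q)
    subgoal using assms by simp
    subgoal using ab by simp
    subgoal using ab1 by simp
    subgoal using ia by algebra
    done
qed

lemma pw_AS:
  fixes a b :: complex assumes "a \<noteq> 1" "b \<noteq> 1" "a \<noteq> 0" "b \<noteq> 0"
    and "a + inverse a \<noteq> b + inverse b"
  shows "(a + 1) / (2 * (a - 1)) * ((a - inverse a) / ((a + inverse a) - (b + inverse b)))
       + (b + 1) / (2 * (b - 1)) * ((b - inverse b) / ((b + inverse b) - (a + inverse a))) = 1/2"
proof -
  have e: "(a + 1) / (2 * (a - 1)) * (a - inverse a) = ((a + inverse a) + 2)/2" 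
    if "a \<noteq> 0" "a \<noteq> 1" for a :: complex
  proof -
    have "a - 1 \<noteq> 0" using that by simp
    thus ?thesis using that by (simp add: field_simps)
  qed
  have g: "(p + 2)/2/(p - q) + (q + 2)/2/(q - p) = 1/2" if "p \<noteq> q" for p q :: complex
  proof -
    show ?thesis unfolding divide_divide_eq_left
      apply (rule frac2)
      subgoal using that by simp
      subgoal using that by simp
      subgoal by algebra
      done
  qed
  have "(a + 1) / (2 * (a - 1)) * ((a - inverse a) / ((a + inverse a) - (b + inverse b)))
       + (b + 1) / (2 * (b - 1)) * ((b - inverse b) / ((b + inverse b) - (a + inverse a)))
     = ((a + 1) / (2 * (a - 1)) * (a - inverse a)) / ((a + inverse a) - (b + inverse b))
       + ((b + 1) / (2 * (b - 1)) * (b - inverse b)) / ((b + inverse b) - (a + inverse a))"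
    by simp
  also have "\<dots> = 1/2" unfolding e[OF assms(3,1)] e[OF assms(4,2)] by (rule g) (rule assms(5))
  finally show ?thesis .
qed

lemma pw_W:
  fixes a b :: complex assumes "a \<noteq> b"
  shows "a / (a - b) + b / (b - a) = 1"
  apply (rule frac2)
  subgoal using assms by simp
  subgoal using assms by simp
  subgoal by algebra
  done

lemma s2: fixes a :: complex assumes "a \<noteq> 0" shows "(a - inverse a)^2 = (a + inverse a)^2 - 4"
  using assms by (simp add: power2_eq_square field_simps)

lemma mult_if0: "a * (if c then b else 0) = (if c then a * b else (0::'a::mult_zero))"
  by simp

lemma split_neq:
  fixes f :: "'n::{finite,linorder} \<Rightarrow> 'b::comm_monoid_add"
  shows "(\<Sum>j\<in>UNIV. if r < j then f j else 0) + (\<Sum>j\<in>UNIV. if j < r then f j else 0)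
       = (\<Sum>j\<in>UNIV. if r \<noteq> j then f j else 0)"
  by (simp add: sum.distrib[symmetric]) (intro sum.cong refl, cases rule: linorder_cases, auto)

lemma sum_pick:
  fixes f :: "'n::finite \<Rightarrow> 'b::comm_monoid_add"
  shows "(\<Sum>k\<in>UNIV. f k) = f j + (\<Sum>k\<in>UNIV. if j \<noteq> k then f k else 0)"
proof -
  have "(\<Sum>k\<in>UNIV. f k) = (\<Sum>k\<in>UNIV. (if j = k then f k else 0) + (if j \<noteq> k then f k else 0))"
    by (intro sum.cong refl) auto
  also have "\<dots> = f j + (\<Sum>k\<in>UNIV. if j \<noteq> k then f k else 0)"
    by (simp add: sum.distrib sum.delta)
  finally show ?thesis .
qed

definition ww :: "('n \<Rightarrow> complex) \<Rightarrow> 'n \<Rightarrow> complex" where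
  "ww x k = x k + inverse (x k)"

lemma cnt1: "(\<Sum>j\<in>(UNIV::'n::finite set). if r \<noteq> j then (1::complex) else 0) = of_nat CARD('n) - 1"
proof -
  have "(\<Sum>j\<in>(UNIV::'n set). if r \<noteq> j then (1::complex) else 0)
      = (\<Sum>j\<in>(UNIV::'n set). 1 - (if r = j then 1 else 0))"
    by (intro sum.cong refl) auto
  also have "\<dots> = of_nat CARD('n) - 1" by (simp add: sum_subtractf)
  finally show ?thesis .
qed

lemma cnt2: assumes "r \<noteq> j"
  shows "(\<Sum>k\<in>(UNIV::'n::finite set). if r \<noteq> j \<and> r \<noteq> k \<and> j \<noteq> k then (1::complex) else 0) = of_nat CARD('n) - 2"
proof -
  have "(\<Sum>k\<in>(UNIV::'n set). if r \<noteq> j \<and> r \<noteq> k \<and> j \<noteq> k then (1::complex) else 0)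
      = (\<Sum>k\<in>(UNIV::'n set). 1 - (if r = k then 1 else 0) - (if j = k then 1 else 0))"
    using assms by (intro sum.cong refl) auto
  also have "\<dots> = of_nat CARD('n) - 2" by (simp add: sum_subtractf)
  finally show ?thesis .
qed

lemma if_diff0: "(if c then a - b else 0) = (if c then a else 0) - (if c then b else (0::'a::ab_group_add))"
  by simp

lemma neg_aux: fixes a b c :: complex shows "-1 * (a / (-c) - (-1) * (b / (-c)^2)) = a / c - b / c^2"
  by simp

lemma neg_aux1: fixes a c :: complex shows "-1 * (a / (-c)) = a / c"
  by simp

lemma half_half: "(1/2::complex) + 1/2 = 1" by (simp add: field_simps)

lemma alg_main:
  fixes x :: "'n::{finite,linorder} \<Rightarrow> complex" and mu1 mu2 :: complex
  assumes x0: "\<And>k. x k \<noteq> 0" and x1: "\<And>k. x k \<noteq> 1"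
    and wd: "\<And>i j. i \<noteq> j \<Longrightarrow> ww x i \<noteq> ww x j"
  shows "(\<Sum>r\<in>UNIV. (mu1 * ((x r + 1) / (2 * (x r - 1)))
              + mu2 * (\<Sum>(i,j)\<in>{(i,j). i<j}. cc r i j * ((x r - inverse (x r)) / (ww x i - ww x j))))^2
          + (- mu1 * (x r / (x r - 1)^2)
              + mu2 * (\<Sum>(i,j)\<in>{(i,j). i<j}. cc r i j * ((x r + inverse (x r)) / (ww x i - ww x j)
                       - cc r i j * ((x r - inverse (x r))^2 / (ww x i - ww x j)^2)))))
      + (mu1 * (1 - mu1) * (\<Sum>r\<in>UNIV. x r / (x r - 1)^2)
         + 2 * mu2 * (1 - mu2) * ((\<Sum>(i,j)\<in>{(i,j). i<j}. x i * x j / (x i - x j)^2)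
                                + (\<Sum>(i,j)\<in>{(i,j). i<j}. x i * x j / (x i * x j - 1)^2)))
      = of_nat CARD('n) * mu1^2 / 4
          + of_nat (CARD('n) * (CARD('n) - 1)) / 2 * mu1 * mu2
          + of_nat (CARD('n) * (CARD('n) - 1) * (2 * CARD('n) - 1)) * mu2^2 / 6"
proof -
  define N :: complex where "N = of_nat CARD('n)"
  define s where "s r = x r - inverse (x r)" for r
  define A where "A r = (x r + 1) / (2 * (x r - 1))" for r
  define d where "d r j = ww x r - ww x j" for r j
  define E where "E r = x r / (x r - 1)^2" for r
  define S where "S r = (\<Sum>j\<in>UNIV. if r \<noteq> j then s r / d r j else 0)" for r
  define W where "W r = (\<Sum>j\<in>UNIV. if r \<noteq> j then ww x r / d r j else 0)" for r
  define Q where "Q r = (\<Sum>j\<in>UNIV. if r \<noteq> j then (s r)^2 / (d r j)^2 else 0)" for r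
  define Fm where "Fm r j k = (if r \<noteq> j \<and> r \<noteq> k \<and> j \<noteq> k then (s r)^2 / (d r j * d r k) else 0)" for r j k
  define R3 where "R3 = (\<Sum>r\<in>UNIV. \<Sum>j\<in>UNIV. \<Sum>k\<in>UNIV. Fm r j k)"
  define N2 where "N2 = (\<Sum>i\<in>(UNIV::'n set). \<Sum>j\<in>UNIV. if i < j then (1::complex) else 0)"
  define N3 where "N3 = (\<Sum>r\<in>(UNIV::'n set). \<Sum>j\<in>UNIV. \<Sum>k\<in>UNIV. if r \<noteq> j \<and> r \<noteq> k \<and> j \<noteq> k then (1::complex) else 0)"
  define P12 where "P12 = (\<Sum>i\<in>UNIV. \<Sum>j\<in>UNIV. if i < j then x i * x j / (x i - x j)^2 + x i * x j / (x i * x j - 1)^2 else 0)"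
  have dneg: "d j r = - d r j" for r j by (simp add: d_def)

  have BS: "(\<Sum>(i,j)\<in>{(i,j). i<j}. cc r i j * ((x r - inverse (x r)) / (ww x i - ww x j))) = S r" for r
  proof -
    have "(\<Sum>(i,j)\<in>{(i,j). i<j}. cc r i j * ((x r - inverse (x r)) / (ww x i - ww x j)))
       = (\<Sum>(i,j)\<in>{(i,j). i<j}. cc r i j * (s r / d i j))" by (simp add: s_def d_def)
    also have "\<dots> = (\<Sum>j\<in>UNIV. if r < j then 1 * (s r / d r j) else 0) + (\<Sum>i\<in>UNIV. if i < r then (-1) * (s r / d i r) else 0)"
      using cc_sum[of "\<lambda>i j c. c * (s r / d i j)" r] by simp
    also have "\<dots> = (\<Sum>j\<in>UNIV. if r < j then s r / d r j else 0) + (\<Sum>j\<in>UNIV. if j < r then s r / d r j else 0)"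
      by (intro arg_cong2[where f="(+)"] sum.cong refl) (auto simp: dneg[where r=r] neg_aux1)
    also have "\<dots> = S r" unfolding S_def by (rule split_neq)
    finally show ?thesis .
  qed
  have DBS: "(\<Sum>(i,j)\<in>{(i,j). i<j}. cc r i j * ((x r + inverse (x r)) / (ww x i - ww x j)
                       - cc r i j * ((x r - inverse (x r))^2 / (ww x i - ww x j)^2))) = W r - Q r" for r
  proof -
    have "(\<Sum>(i,j)\<in>{(i,j). i<j}. cc r i j * ((x r + inverse (x r)) / (ww x i - ww x j)
                       - cc r i j * ((x r - inverse (x r))^2 / (ww x i - ww x j)^2)))
       = (\<Sum>(i,j)\<in>{(i,j). i<j}. cc r i j * (ww x r / d i j - cc r i j * ((s r)^2 / (d i j)^2)))"
      by (simp add: s_def d_def ww_def)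
    also have "\<dots> = (\<Sum>j\<in>UNIV. if r < j then 1 * (ww x r / d r j - 1 * ((s r)^2 / (d r j)^2)) else 0)
        + (\<Sum>i\<in>UNIV. if i < r then (-1) * (ww x r / d i r - (-1) * ((s r)^2 / (d i r)^2)) else 0)"
      using cc_sum[of "\<lambda>i j c. c * (ww x r / d i j - c * ((s r)^2 / (d i j)^2))" r] by simp
    also have "\<dots> = (\<Sum>j\<in>UNIV. if r < j then ww x r / d r j - (s r)^2 / (d r j)^2 else 0)
        + (\<Sum>j\<in>UNIV. if j < r then ww x r / d r j - (s r)^2 / (d r j)^2 else 0)"
      by (intro arg_cong2[where f="(+)"] sum.cong refl) (auto simp: dneg[where r=r] neg_aux)
    also have "\<dots> = (\<Sum>j\<in>UNIV. if r \<noteq> j then ww x r / d r j - (s r)^2 / (d r j)^2 else 0)"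
      by (rule split_neq)
    also have "\<dots> = W r - Q r" unfolding W_def Q_def
      by (simp add: sum_subtractf[symmetric] if_diff0) 
    finally show ?thesis .
  qed

  have dne: "d r j \<noteq> 0" if "r \<noteq> j" for r j using wd[OF that] by (simp add: d_def)
  have per: "(mu1 * ((x r + 1) / (2 * (x r - 1)))
              + mu2 * (\<Sum>(i,j)\<in>{(i,j). i<j}. cc r i j * ((x r - inverse (x r)) / (ww x i - ww x j))))^2
          + (- mu1 * (x r / (x r - 1)^2)
              + mu2 * (\<Sum>(i,j)\<in>{(i,j). i<j}. cc r i j * ((x r + inverse (x r)) / (ww x i - ww x j)
                       - cc r i j * ((x r - inverse (x r))^2 / (ww x i - ww x j)^2))))
        = mu1^2 * (A r)^2 + 2 * mu1 * mu2 * (A r * S r) + mu2^2 * (S r)^2 - mu1 * E r + mu2 * W r - mu2 * Q r" for r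
  proof -
    have eA: "(x r + 1) / (2 * (x r - 1)) = A r" by (simp add: A_def)
    have eE: "x r / (x r - 1)^2 = E r" by (simp add: E_def)
    show ?thesis unfolding BS DBS eA eE by algebra
  qed
  define SA2 where "SA2 = (\<Sum>r\<in>UNIV. (A r)^2)"
  define SAS where "SAS = (\<Sum>r\<in>UNIV. A r * S r)"
  define SS2 where "SS2 = (\<Sum>r\<in>UNIV. (S r)^2)"
  define SE where "SE = (\<Sum>r\<in>UNIV. E r)"
  define SW where "SW = (\<Sum>r\<in>UNIV. W r)"
  define SQ where "SQ = (\<Sum>r\<in>UNIV. Q r)"
  have tot: "(\<Sum>r\<in>UNIV. mu1^2 * (A r)^2 + 2 * mu1 * mu2 * (A r * S r) + mu2^2 * (S r)^2 - mu1 * E r + mu2 * W r - mu2 * Q r)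
     = mu1^2 * SA2 + 2 * mu1 * mu2 * SAS + mu2^2 * SS2 - mu1 * SE + mu2 * SW - mu2 * SQ"
    unfolding SA2_def SAS_def SS2_def SE_def SW_def SQ_def
    by (simp only: sum.distrib sum_subtractf sum_distrib_left)
  have F1: "SA2 = N / 4 + SE"
  proof -
    have "SA2 = (\<Sum>r\<in>UNIV. 1/4 + E r)" unfolding SA2_def A_def E_def
      by (intro sum.cong refl t2 x1)
    also have "\<dots> = N / 4 + SE" by (simp add: sum.distrib SE_def N_def)
    finally show ?thesis .
  qed
  have F2: "SAS = N2 / 2"
  proof -
    have "SAS = (\<Sum>r\<in>UNIV. \<Sum>j\<in>UNIV. if r \<noteq> j then A r * (s r / d r j) else 0)"
      unfolding SAS_def S_def by (simp add: sum_distrib_left mult_if0)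
    also have "\<dots> = (\<Sum>i\<in>UNIV. \<Sum>j\<in>UNIV. if i < j then A i * (s i / d i j) + A j * (s j / d j i) else 0)"
      by (rule ORD)
    also have "\<dots> = (\<Sum>i\<in>UNIV. \<Sum>j\<in>UNIV. (if (i::'n) < j then 1 else 0) / 2)"
      unfolding A_def s_def d_def ww_def
    proof (rule sum.cong[OF refl], rule sum.cong[OF refl])
      fix i j :: 'n
      show "(if i < j then (x i + 1) / (2 * (x i - 1)) * ((x i - inverse (x i)) / ((x i + inverse (x i)) - (x j + inverse (x j))))
              + (x j + 1) / (2 * (x j - 1)) * ((x j - inverse (x j)) / ((x j + inverse (x j)) - (x i + inverse (x i)))) else 0)
            = (if i < j then 1 else 0) / 2"
      proof (cases "i < j")
        case True then have "i \<noteq> j" by simp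
        from pw_AS[OF x1 x1 x0 x0 wd[OF this, unfolded ww_def]] True show ?thesis by simp
      qed simp
    qed
    also have "\<dots> = N2 / 2" unfolding N2_def by (simp only: sum_divide_distrib)
    finally show ?thesis .
  qed
  have F3: "SS2 = SQ + R3"
  proof -
    have "(S r)^2 = Q r + (\<Sum>j\<in>UNIV. \<Sum>k\<in>UNIV. Fm r j k)" for r
    proof -
      define a where "a j = (if r \<noteq> j then s r / d r j else 0)" for j
      have "(S r)^2 = (\<Sum>j\<in>UNIV. \<Sum>k\<in>UNIV. a j * a k)"
        unfolding S_def a_def[symmetric] power2_eq_square by (rule sum_product)
      also have "\<dots> = (\<Sum>j\<in>UNIV. a j * a j + (\<Sum>k\<in>UNIV. if j \<noteq> k then a j * a k else 0))"
        by (intro sum.cong refl sum_pick)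
      also have "\<dots> = (\<Sum>j\<in>UNIV. (if r \<noteq> j then (s r)^2 / (d r j)^2 else 0) + (\<Sum>k\<in>UNIV. Fm r j k))"
        unfolding a_def Fm_def by (intro sum.cong refl arg_cong2[where f="(+)"]) (auto simp: power2_eq_square)
      also have "\<dots> = Q r + (\<Sum>j\<in>UNIV. \<Sum>k\<in>UNIV. Fm r j k)" unfolding Q_def by (simp add: sum.distrib)
      finally show ?thesis .
    qed
    thus ?thesis unfolding SS2_def SQ_def R3_def by (simp add: sum.distrib)
  qed
  have F4: "SW = N2"
  proof -
    have "SW = (\<Sum>i\<in>UNIV. \<Sum>j\<in>UNIV. if i \<noteq> j then ww x i / d i j else 0)"
      unfolding SW_def W_def ..
    also have "\<dots> = (\<Sum>i\<in>UNIV. \<Sum>j\<in>UNIV. if i < j then ww x i / d i j + ww x j / d j i else 0)"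
      by (rule ORD)
    also have "\<dots> = N2" unfolding N2_def d_def
      by (intro sum.cong refl) (auto intro!: pw_W wd)
    finally show ?thesis .
  qed
  have F5: "SQ = 2 * P12 + N2"
  proof -
    have "SQ = (\<Sum>i\<in>UNIV. \<Sum>j\<in>UNIV. if i \<noteq> j then (s i)^2 / (d i j)^2 else 0)"
      unfolding SQ_def Q_def ..
    also have "\<dots> = (\<Sum>i\<in>UNIV. \<Sum>j\<in>UNIV. if i < j then (s i)^2 / (d i j)^2 + (s j)^2 / (d j i)^2 else 0)"
      by (rule ORD)
    also have "\<dots> = (\<Sum>i\<in>UNIV. \<Sum>j\<in>UNIV. 2 * (if i < j then x i * x j / (x i - x j)^2 + x i * x j / (x i * x j - 1)^2 else 0)
                        + (if i < j then 1 else 0))"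
      unfolding s_def d_def ww_def
    proof (rule sum.cong[OF refl], rule sum.cong[OF refl])
      fix i j :: 'n
      show "(if i < j then (x i - inverse (x i))^2 / ((x i + inverse (x i)) - (x j + inverse (x j)))^2
              + (x j - inverse (x j))^2 / ((x j + inverse (x j)) - (x i + inverse (x i)))^2 else 0)
            = 2 * (if i < j then x i * x j / (x i - x j)^2 + x i * x j / (x i * x j - 1)^2 else 0)
                        + (if i < j then 1 else 0)"
      proof (cases "i < j")
        case True then have "i \<noteq> j" by simp
        from pw_Q[OF x0 x0 wd[OF this, unfolded ww_def]] True show ?thesis by simp
      qed simp
    qed
    also have "\<dots> = 2 * P12 + N2" unfolding P12_def N2_def
      by (simp only: sum.distrib sum_distrib_left)
    finally show ?thesis .
  qed
  have F6: "3 * R3 = N3"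
  proof -
    have c1: "(\<Sum>r\<in>UNIV. \<Sum>j\<in>UNIV. \<Sum>k\<in>UNIV. Fm j k r) = R3"
    proof -
      have "(\<Sum>r\<in>UNIV. \<Sum>j\<in>UNIV. \<Sum>k\<in>UNIV. Fm j k r) = (\<Sum>j\<in>UNIV. \<Sum>r\<in>UNIV. \<Sum>k\<in>UNIV. Fm j k r)"
        by (rule sum.swap)
      also have "\<dots> = (\<Sum>j\<in>UNIV. \<Sum>k\<in>UNIV. \<Sum>r\<in>UNIV. Fm j k r)"
        by (rule sum.cong[OF refl], rule sum.swap)
      finally show ?thesis unfolding R3_def .
    qed
    have c2: "(\<Sum>r\<in>UNIV. \<Sum>j\<in>UNIV. \<Sum>k\<in>UNIV. Fm k r j) = R3"
    proof -
      have "(\<Sum>r\<in>UNIV. \<Sum>j\<in>UNIV. \<Sum>k\<in>UNIV. Fm k r j) = (\<Sum>r\<in>UNIV. \<Sum>k\<in>UNIV. \<Sum>j\<in>UNIV. Fm k r j)"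
        by (rule sum.cong[OF refl], rule sum.swap)
      also have "\<dots> = (\<Sum>k\<in>UNIV. \<Sum>r\<in>UNIV. \<Sum>j\<in>UNIV. Fm k r j)"
        by (rule sum.swap)
      finally show ?thesis unfolding R3_def .
    qed
    have "3 * R3 = (\<Sum>r\<in>UNIV. \<Sum>j\<in>UNIV. \<Sum>k\<in>UNIV. Fm r j k + Fm j k r + Fm k r j)"
      using c1 c2 unfolding R3_def by (simp add: sum.distrib)
    also have "\<dots> = N3" unfolding N3_def
    proof (intro sum.cong refl)
      fix r j k :: 'n
      show "Fm r j k + Fm j k r + Fm k r j = (if r \<noteq> j \<and> r \<noteq> k \<and> j \<noteq> k then 1 else 0)"
      proof (cases "r \<noteq> j \<and> r \<noteq> k \<and> j \<noteq> k")
        case True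
        hence w3: "ww x r \<noteq> ww x j" "ww x r \<noteq> ww x k" "ww x j \<noteq> ww x k" using wd by auto
        have "Fm r j k + Fm j k r + Fm k r j
            = ((ww x r)^2 - 4) / ((ww x r - ww x j) * (ww x r - ww x k))
              + ((ww x j)^2 - 4) / ((ww x j - ww x k) * (ww x j - ww x r))
              + ((ww x k)^2 - 4) / ((ww x k - ww x r) * (ww x k - ww x j))"
          using True unfolding Fm_def s_def d_def by (auto simp: s2 x0 ww_def)
        also have "\<dots> = 1" by (rule t1[OF w3])
        finally show ?thesis using True by simp
      next
        case False thus ?thesis unfolding Fm_def by auto
      qed
    qed
    finally show ?thesis .
  qed
  have F7a: "N2 = N * (N - 1) / 2"
  proof -
    have "(\<Sum>i\<in>(UNIV::'n set). \<Sum>j\<in>UNIV. if i \<noteq> j then (1/2::complex) else 0)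
        = (\<Sum>i\<in>(UNIV::'n set). \<Sum>j\<in>UNIV. if i < j then 1/2 + 1/2 else 0)"
      by (rule ORD)
    also have "\<dots> = N2" unfolding N2_def half_half ..
    finally have "N2 = (\<Sum>i\<in>(UNIV::'n set). \<Sum>j\<in>UNIV. if i \<noteq> j then (1/2::complex) else 0)" ..
    also have "\<dots> = (\<Sum>i\<in>(UNIV::'n set). 1/2 * (\<Sum>j\<in>UNIV. if i \<noteq> j then (1::complex) else 0))"
      unfolding sum_distrib_left by (intro sum.cong refl) simp
    also have "\<dots> = (\<Sum>i\<in>(UNIV::'n set). 1/2 * (N - 1))" unfolding cnt1 N_def ..
    also have "\<dots> = N * (N - 1) / 2" by (simp add: N_def)
    finally show ?thesis .
  qed
  have F7b: "N3 = N * (N - 1) * (N - 2)"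
  proof -
    have "N3 = (\<Sum>r\<in>(UNIV::'n set). \<Sum>j\<in>UNIV. (if r \<noteq> j then 1 else 0) * (N - 2))"
      unfolding N3_def
    proof (rule sum.cong[OF refl], rule sum.cong[OF refl])
      fix r j :: 'n
      show "(\<Sum>k\<in>UNIV. if r \<noteq> j \<and> r \<noteq> k \<and> j \<noteq> k then (1::complex) else 0) = (if r \<noteq> j then 1 else 0) * (N - 2)"
      proof (cases "r = j")
        case True thus ?thesis by simp
      next
        case False show ?thesis unfolding cnt2[OF False] N_def using False by simp
      qed
    qed
    also have "\<dots> = (\<Sum>r\<in>(UNIV::'n set). (N - 1) * (N - 2))"
      by (intro sum.cong refl) (simp only: sum_distrib_right[symmetric] cnt1 N_def)
    also have "\<dots> = N * (N - 1) * (N - 2)" by (simp add: N_def)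
    finally show ?thesis .
  qed
  have P12eq: "(\<Sum>(i,j)\<in>{(i,j). i<j}. x i * x j / (x i - x j)^2) + (\<Sum>(i,j)\<in>{(i,j). i<j}. x i * x j / (x i * x j - 1)^2) = P12"
    unfolding PS P12_def by (simp only: sum.distrib[symmetric] if_add0)
  have n1: "1 \<le> CARD('n)" by (simp add: Suc_le_eq)
  have rhs: "of_nat CARD('n) * mu1^2 / 4
          + of_nat (CARD('n) * (CARD('n) - 1)) / 2 * mu1 * mu2
          + of_nat (CARD('n) * (CARD('n) - 1) * (2 * CARD('n) - 1)) * mu2^2 / 6
        = N * mu1^2 / 4 + N * (N - 1) / 2 * mu1 * mu2 + N * (N - 1) * (2 * N - 1) * mu2^2 / 6"
    using n1 by (simp add: N_def of_nat_diff)
  have SEeq: "(\<Sum>r\<in>UNIV. x r / (x r - 1)^2) = SE" unfolding SE_def E_def ..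
  have R3v: "R3 = N * (N - 1) * (N - 2) / 3"
  proof -
    have "R3 = (3 * R3) / 3" by simp
    also note F6
    also note F7b
    finally show ?thesis .
  qed
  show ?thesis
    unfolding per P12eq rhs SEeq tot F1 F2 F3 F4 F5 F7a R3v
    by (simp add: field_simps power2_eq_square)
qed

lemma vupd_nth: "vupd z r t $ k = (if k = r then t else z $ k)"
  by (simp add: vupd_def)

lemma vupd_vupd: "vupd (vupd z r t) r s = vupd z r s"
  by (simp add: vupd_def vec_eq_iff)

lemma vupd_self: "vupd z r (z $ r) = z"
  by (simp add: vupd_def vec_eq_iff)

lemma vupd_isCont: "isCont (\<lambda>t. vupd z r t) t0"
  unfolding vupd_def isCont_def
proof (rule tendsto_vec_lambda)
  fix k
  show "((\<lambda>t. if k = r then t else z $ k) \<longlongrightarrow> (if k = r then t0 else z $ k)) (at t0)"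
    by (cases "k = r") (auto intro: tendsto_ident_at tendsto_const)
qed

lemma dq_deriv: "((\<lambda>s. if k = r then s else c) has_field_derivative (if k = r then 1 else 0)) (at t)"
  by (cases "k = r") (auto intro!: derivative_eq_intros)

lemma dW_deriv:
  assumes "t \<noteq> 0" "k = r \<or> c \<noteq> 0"
  shows "((\<lambda>s. (if k = r then s else c) + inverse (if k = r then s else c))
          has_field_derivative (if k = r then 1 - inverse (t^2) else 0)) (at t)"
  using assms by (cases "k = r") (auto intro!: derivative_eq_intros simp: power2_eq_square)

lemma tL_alg:
  fixes u :: complex assumes "u \<noteq> 0" "u - inverse u \<noteq> 0"
  shows "u^2 * ((u * (1/2 * (1 / u^2)) - inverse u * (-1/2 * (1 / u^2))) / (u - inverse u))
       = (u^2 + 1) / (2 * (u^2 - 1))"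
proof -
  have a: "u^2 - 1 \<noteq> 0" using assms by (auto simp: field_simps power2_eq_square)
  show ?thesis using assms a by (simp add: field_simps power2_eq_square)
qed

lemma tM_alg:
  fixes t c D :: complex assumes "t \<noteq> 0"
  shows "t * (c * (1 - inverse (t^2)) / D) = c * ((t - inverse t) / D)"
  using assms by (cases "D = 0") (simp_all add: field_simps power2_eq_square)

lemma pd_alg:
  fixes t0 c D E :: complex assumes "t0 \<noteq> 0" "D \<noteq> 0"
  shows "c * (((1 + inverse (t0^2)) * D - (t0 - inverse t0) * (c * (1 - inverse (t0^2)))) / D^2)
       = (c * ((t0 + inverse t0) / D - c * ((t0 - inverse t0)^2 / D^2))) / t0"
  using assms by (simp add: field_simps power2_eq_square)

lemma pair_deriv:
  fixes t0 c Di Dj :: complex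
  assumes t0: "t0 \<noteq> 0" and D: "Di - Dj \<noteq> 0"
  and dWi: "(Wi has_field_derivative Di') (at t0)" and dWj: "(Wj has_field_derivative Dj') (at t0)"
  and Wi: "Wi t0 = Di" and Wj: "Wj t0 = Dj"
  and Dd: "Di' - Dj' = c * (1 - inverse (t0^2))"
  shows "((\<lambda>t. c * ((t - inverse t) / (Wi t - Wj t))) has_field_derivative
           (c * ((t0 + inverse t0) / (Di - Dj) - c * ((t0 - inverse t0)^2 / (Di - Dj)^2))) / t0) (at t0)"
proof -
  have "((\<lambda>t. c * ((t - inverse t) / (Wi t - Wj t))) has_field_derivative
          c * (((1 + inverse (t0^2)) * (Di - Dj) - (t0 - inverse t0) * (Di' - Dj')) / (Di - Dj)^2)) (at t0)"
    using t0 D Wi Wj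
    apply (auto intro!: derivative_eq_intros dWi dWj simp: power2_eq_square)
    apply (simp_all add: algebra_simps)
    done
  moreover have "c * (((1 + inverse (t0^2)) * (Di - Dj) - (t0 - inverse t0) * (Di' - Dj')) / (Di - Dj)^2)
      = (c * ((t0 + inverse t0) / (Di - Dj) - c * ((t0 - inverse t0)^2 / (Di - Dj)^2))) / t0"
    unfolding Dd by (rule pd_alg[OF t0 D])
  ultimately show ?thesis by simp
qed

lemma log_deriv:
  fixes h g :: "complex \<Rightarrow> complex"
  assumes hc: "isCont h t0" and ev: "\<forall>\<^sub>F t in nhds t0. exp (h t) = g t"
    and gd: "(g has_field_derivative g') (at t0)"
  shows "(h has_field_derivative g' / g t0) (at t0)"
proof -
  have e0: "exp (h t0) = g t0" using eventually_nhds_x_imp_x[OF ev] .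
  hence g0: "g t0 \<noteq> 0" by (metis exp_not_eq_zero)
  define l where "l w = h t0 + Ln (w / g t0)" for w
  have ld: "(l has_field_derivative inverse (g t0)) (at (g t0))"
    unfolding l_def using g0
    by (auto intro!: derivative_eq_intros simp: field_simps)
  have lgd: "((\<lambda>t. l (g t)) has_field_derivative g' / g t0) (at t0)"
    using DERIV_chain2[OF ld gd] by (simp add: field_simps)
  have gc: "isCont g t0" using gd by (rule DERIV_isCont)
  have lc: "isCont (\<lambda>t. l (g t)) t0" using lgd by (rule DERIV_isCont)
  have dc: "isCont (\<lambda>t. h t - l (g t)) t0" using hc lc by (intro continuous_intros)
  have d0: "h t0 - l (g t0) = 0" unfolding l_def using g0 by simp
  have "((\<lambda>t. h t - l (g t)) \<longlongrightarrow> 0) (at t0)" using dc d0 unfolding isCont_def by simp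
  hence "\<forall>\<^sub>F t in at t0. norm (h t - l (g t)) < 2 * pi"
    by (auto simp: tendsto_iff dist_norm)
  hence evn: "\<forall>\<^sub>F t in nhds t0. norm (h t - l (g t)) < 2 * pi"
    using d0 by (simp add: eventually_nhds_conv_at)
  have "\<forall>\<^sub>F t in nhds t0. h t = l (g t)"
    using evn ev
  proof eventually_elim
    case (elim t)
    have gt: "g t \<noteq> 0" using elim(2) by (metis exp_not_eq_zero)
    have "exp (l (g t)) = g t" unfolding l_def using gt g0 e0
      by (simp add: exp_add)
    hence "exp (h t) = exp (l (g t))" using elim(2) by simp
    then obtain n :: int where n: "h t = l (g t) + (of_int (2 * n) * pi) * \<i>"
      using exp_eq by blast
    have "norm ((of_int (2 * n) * pi) * \<i>) < 2 * pi" using elim(1) n by simp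
    hence "\<bar>2 * real_of_int n\<bar> * pi < 2 * pi" by (simp add: norm_mult abs_mult)
    hence "\<bar>real_of_int n\<bar> < 1" using pi_gt_zero by (simp add: abs_mult)
    hence "n = 0" by linarith
    thus ?case using n by simp
  qed
  from DERIV_cong_ev[OF refl this refl, THEN iffD2, OF lgd] show ?thesis .
qed

lemma nzU:
  fixes U :: "(complex^('n::{finite,linorder})) set"
    and Lz :: "'n \<Rightarrow> complex^('n::{finite,linorder}) \<Rightarrow> complex"
    and L :: "'n \<Rightarrow> complex^('n::{finite,linorder}) \<Rightarrow> complex"
    and M :: "'n \<Rightarrow> 'n \<Rightarrow> complex^('n::{finite,linorder}) \<Rightarrow> complex"
  assumes Lze: "\<And>r z. z \<in> U \<Longrightarrow> exp (Lz r z) = z $ r"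
    and Le: "\<And>r z. z \<in> U \<Longrightarrow>
           exp (L r z) = branch_pow (Lz r z) (1/2) - branch_pow (Lz r z) (-1/2)"
    and Me: "\<And>i j z. i < j \<Longrightarrow> z \<in> U \<Longrightarrow>
           exp (M i j z) = z $ i + inverse (z $ i) - z $ j - inverse (z $ j)"
    and p: "p \<in> U"
  shows "p $ k \<noteq> 0" "p $ k \<noteq> 1" "i \<noteq> j \<Longrightarrow> ww (vec_nth p) i \<noteq> ww (vec_nth p) j"
proof -
  show "p $ k \<noteq> 0" using Lze[OF p, of k] by (metis exp_not_eq_zero)
  show "p $ k \<noteq> 1"
  proof
    assume h: "p $ k = 1"
    define u where "u = exp ((1/2) * Lz k p)"
    have um: "exp ((-1/2) * Lz k p) = inverse u"
      unfolding u_def by (simp add: exp_minus[symmetric])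
    have "u * u = exp (Lz k p)" unfolding u_def by (simp add: exp_add[symmetric])
    hence uu: "u * u = 1" using Lze[OF p, of k] h by simp
    hence "inverse u = u" by (metis inverse_unique)
    hence "exp (L k p) = 0" using Le[OF p, of k] um unfolding branch_pow_def u_def[symmetric] by simp
    thus False by simp
  qed
  show "ww (vec_nth p) i \<noteq> ww (vec_nth p) j" if "i \<noteq> j"
  proof (cases "i < j")
    case True
    have "exp (M i j p) \<noteq> 0" by simp
    thus ?thesis using Me[OF True p] by (auto simp: ww_def)
  next
    case False
    hence "j < i" using that by auto
    have "exp (M j i p) \<noteq> 0" by simp
    hence "ww (vec_nth p) j \<noteq> ww (vec_nth p) i" using Me[OF \<open>j < i\<close> p] by (auto simp: ww_def)
    thus ?thesis by metis
  qed
qed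

lemma comb_div: "m1 * ((- a) / t) + m2 * (S / t) = (- m1 * a + m2 * S) / (t::complex)"
  by (simp add: diff_divide_distrib add_divide_distrib)

lemma slice:
  fixes mu1 mu2 :: complex
    and U :: "(complex^('n::{finite,linorder})) set"
    and Lz :: "'n \<Rightarrow> complex^('n::{finite,linorder}) \<Rightarrow> complex"
    and L :: "'n \<Rightarrow> complex^('n::{finite,linorder}) \<Rightarrow> complex"
    and M :: "'n \<Rightarrow> 'n \<Rightarrow> complex^('n::{finite,linorder}) \<Rightarrow> complex"
    and phi :: "complex^('n::{finite,linorder}) \<Rightarrow> complex"
  assumes U: "open U"
    and Lzc: "\<And>r. continuous_on U (Lz r)"
    and Lze: "\<And>r z. z \<in> U \<Longrightarrow> exp (Lz r z) = z $ r"
    and Lc: "\<And>r. continuous_on U (L r)"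
    and Le: "\<And>r z. z \<in> U \<Longrightarrow>
           exp (L r z) = branch_pow (Lz r z) (1/2) - branch_pow (Lz r z) (-1/2)"
    and Mc: "\<And>i j. i < j \<Longrightarrow> continuous_on U (M i j)"
    and Me: "\<And>i j z. i < j \<Longrightarrow> z \<in> U \<Longrightarrow>
           exp (M i j z) = z $ i + inverse (z $ i) - z $ j - inverse (z $ j)"
    and phid: "\<And>z. phi z = (\<Prod>r\<in>UNIV. branch_pow (L r z) mu1) *
                      (\<Prod>(i, j)\<in>{(i, j). i < j}. branch_pow (M i j z) mu2)"
    and z: "z \<in> U"
  shows "euler_op r (euler_op r phi) z = phi z *
     ((mu1 * ((z $ r + 1) / (2 * (z $ r - 1)))
        + mu2 * (\<Sum>(i,j)\<in>{(i,j). i<j}. cc r i j * ((z $ r - inverse (z $ r)) / (ww (vec_nth z) i - ww (vec_nth z) j))))^2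
      + (- mu1 * (z $ r / (z $ r - 1)^2)
        + mu2 * (\<Sum>(i,j)\<in>{(i,j). i<j}. cc r i j * ((z $ r + inverse (z $ r)) / (ww (vec_nth z) i - ww (vec_nth z) j)
                       - cc r i j * ((z $ r - inverse (z $ r))^2 / (ww (vec_nth z) i - ww (vec_nth z) j)^2)))))"
proof -
  have nz1: "p $ k \<noteq> 0" if "p \<in> U" for p k
    apply (rule nzU(1)[where U=U and Lz=Lz and L=L and M=M])
    apply (rule Lze, assumption)
    apply (rule Le, assumption)
    apply (rule Me, assumption, assumption)
    by (rule that)
  have nz2: "p $ k \<noteq> 1" if "p \<in> U" for p k
    apply (rule nzU(2)[where U=U and Lz=Lz and L=L and M=M])
    apply (rule Lze, assumption)
    apply (rule Le, assumption)
    apply (rule Me, assumption, assumption)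
    by (rule that)
  have nz3: "ww (vec_nth p) i \<noteq> ww (vec_nth p) j" if "p \<in> U" "i \<noteq> j" for p i j
    apply (rule nzU(3)[where U=U and Lz=Lz and L=L and M=M])
    apply (rule Lze, assumption)
    apply (rule Le, assumption)
    apply (rule Me, assumption, assumption)
    by (rule that)+
  define v where "v t = vupd z r t" for t
  define q where "q k t = (if k = r then t else z $ k)" for k t
  have vq: "v t $ k = q k t" for t k by (simp add: v_def q_def vupd_nth)
  have vc: "isCont v t" for t
  proof -
    have "v = (\<lambda>t. vupd z r t)" by (simp add: v_def fun_eq_iff)
    thus ?thesis using vupd_isCont by simp
  qed
  define T where "T = v -` U"
  have Topen: "open T" unfolding T_def using U vc by (intro continuous_open_vimage) auto
  define t0 where "t0 = z $ r"
  have vt0: "v t0 = z" by (simp add: v_def t0_def vupd_self)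
  have t0T: "t0 \<in> T" using z vt0 by (simp add: T_def)
  have vT: "v t \<in> U" if "t \<in> T" for t using that by (simp add: T_def)
  have qr: "q r t = t" for t by (simp add: q_def)
  have tnz: "t \<noteq> 0" "t \<noteq> 1" if "t \<in> T" for t
    using nz1[OF vT[OF that], of r] nz2[OF vT[OF that], of r] by (simp_all add: vq qr)
  have qnz: "q k t \<noteq> 0" if "t \<in> T" for t k using nz1[OF vT[OF that], of k] by (simp add: vq)
  have evT: "\<forall>\<^sub>F s in nhds t. s \<in> T" if "t \<in> T" for t
    by (rule eventually_nhds_in_open[OF Topen that])
  have ctU: "isCont (\<lambda>s. F (v s)) t" if "continuous_on U F" "t \<in> T" for F t
  proof -
    have "isCont F (v t)" using that U vT continuous_on_eq_continuous_at by blast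
    thus ?thesis using vc isCont_o2 by blast
  qed
  define Lzd where "Lzd k t = (if k = r then 1 else 0) / q k t" for k t
  have dLz: "((\<lambda>s. Lz k (v s)) has_field_derivative Lzd k t) (at t)" if tT: "t \<in> T" for k t
  proof -
    have ev: "\<forall>\<^sub>F s in nhds t. exp (Lz k (v s)) = q k s"
      using evT[OF tT] by eventually_elim (simp add: Lze vT vq)
    have dq: "((\<lambda>s. q k s) has_field_derivative (if k = r then 1 else 0)) (at t)"
      unfolding q_def by (rule dq_deriv)
    show ?thesis unfolding Lzd_def by (rule log_deriv[OF ctU[OF Lzc tT] ev dq])
  qed
  define gL where "gL k s = exp ((1/2) * Lz k (v s)) - exp ((-1/2) * Lz k (v s))" for k s
  define gLd where "gLd k t = exp ((1/2) * Lz k (v t)) * ((1/2) * Lzd k t) - exp ((-1/2) * Lz k (v t)) * ((-1/2) * Lzd k t)" for k t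
  have dgL: "(gL k has_field_derivative gLd k t) (at t)" if tT: "t \<in> T" for k t
  proof -
    have "gL k = (\<lambda>s. exp ((1/2) * Lz k (v s)) - exp ((-1/2) * Lz k (v s)))" by (simp add: gL_def fun_eq_iff)
    thus ?thesis unfolding gLd_def by (auto intro!: derivative_eq_intros dLz[OF tT])
  qed
  have dL: "((\<lambda>s. L k (v s)) has_field_derivative gLd k t / gL k t) (at t)" if tT: "t \<in> T" for k t
  proof -
    have ev: "\<forall>\<^sub>F s in nhds t. exp (L k (v s)) = gL k s"
      using evT[OF tT] by eventually_elim (simp add: Le vT gL_def branch_pow_def)
    show ?thesis by (rule log_deriv[OF ctU[OF Lc tT] ev dgL[OF tT]])
  qed
  have tL: "t * (gLd k t / gL k t) = (if k = r then (t + 1) / (2 * (t - 1)) else 0)" if tT: "t \<in> T" for k t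
  proof (cases "k = r")
    case False thus ?thesis by (simp add: gLd_def Lzd_def)
  next
    case True
    define u where "u = exp ((1/2) * Lz r (v t))"
    have um: "exp ((-1/2) * Lz r (v t)) = inverse u"
      unfolding u_def by (simp add: exp_minus[symmetric])
    have "u * u = exp (Lz r (v t))" unfolding u_def by (simp add: exp_add[symmetric])
    hence uu: "u^2 = t" using Lze[OF vT[OF tT], of r] by (simp add: vq qr power2_eq_square)
    have u0: "u \<noteq> 0" unfolding u_def by simp
    have gLu: "gL r t = u - inverse u" by (simp only: gL_def um u_def[symmetric])
    have gLe: "gL r t = exp (L r (v t))" using Le[OF vT[OF tT], of r] unfolding gL_def branch_pow_def by (rule sym)
    have gL0: "gL r t \<noteq> 0" unfolding gLe by simp
    have "t * (gLd r t / gL r t) = u^2 * ((u * (1/2 * (1 / u^2)) - inverse u * (-1/2 * (1 / u^2))) / (u - inverse u))"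
      unfolding gLd_def gLu u_def[symmetric] um Lzd_def by (simp add: qr uu)
    also have "\<dots> = (u^2 + 1) / (2 * (u^2 - 1))" using u0 gL0 gLu by (intro tL_alg) auto
    finally show ?thesis using True uu by simp
  qed
  define Wq where "Wq k t = q k t + inverse (q k t)" for k t
  have dWq: "(Wq k has_field_derivative (if k = r then 1 - inverse (t^2) else 0)) (at t)" if tT: "t \<in> T" for k t
  proof -
    have "Wq k = (\<lambda>s. (if k = r then s else z $ k) + inverse (if k = r then s else z $ k))"
      by (simp add: Wq_def q_def fun_eq_iff)
    moreover have "k = r \<or> z $ k \<noteq> 0" using nz1[OF z] by auto
    ultimately show ?thesis using dW_deriv[of t k r "z $ k"] tnz[OF tT] by simp
  qed
  define Md where "Md i j t = cc r i j * (1 - inverse (t^2)) / (Wq i t - Wq j t)" for i j t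
  have dM: "((\<lambda>s. M i j (v s)) has_field_derivative Md i j t) (at t)" if ij: "i < j" and tT: "t \<in> T" for i j t
  proof -
    have ev: "\<forall>\<^sub>F s in nhds t. exp (M i j (v s)) = Wq i s - Wq j s"
      using evT[OF tT] by eventually_elim (simp add: Me[OF ij] vT vq Wq_def algebra_simps)
    have dg: "((\<lambda>s. Wq i s - Wq j s) has_field_derivative cc r i j * (1 - inverse (t^2))) (at t)"
    proof -
      have eq: "(if i = r then 1 - inverse (t^2) else 0) - (if j = r then 1 - inverse (t^2) else 0) = cc r i j * (1 - inverse (t^2))"
        by (cases "i = r"; cases "j = r") (simp_all add: cc_def)
      show ?thesis using DERIV_diff[OF dWq[OF tT, of i] dWq[OF tT, of j]] unfolding eq .
    qed
    show ?thesis unfolding Md_def by (rule log_deriv[OF ctU[OF Mc[OF ij] tT] ev dg])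
  qed
  have tM: "t * Md i j t = cc r i j * ((t - inverse t) / (Wq i t - Wq j t))" if "t \<in> T" for i j t
    unfolding Md_def by (rule tM_alg[OF tnz(1)[OF that]])
  define Gv where "Gv s = (\<Sum>k\<in>UNIV. mu1 * L k (v s)) + (\<Sum>(i,j)\<in>{(i,j). i<j}. mu2 * M i j (v s))" for s
  have phiG: "phi (v s) = exp (Gv s)" for s
    by (simp add: Gv_def phid branch_pow_def exp_add exp_sum case_prod_unfold)
  define Gd where "Gd t = (\<Sum>k\<in>UNIV. mu1 * (gLd k t / gL k t)) + (\<Sum>(i,j)\<in>{(i,j). i<j}. mu2 * Md i j t)" for t
  have dG: "(Gv has_field_derivative Gd t) (at t)" if tT: "t \<in> T" for t
  proof -
    have d1: "((\<lambda>s. \<Sum>k\<in>UNIV. mu1 * L k (v s)) has_field_derivative (\<Sum>k\<in>UNIV. mu1 * (gLd k t / gL k t))) (at t)"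
      by (intro DERIV_sum DERIV_cmult dL[OF tT])
    have d2: "((\<lambda>s. \<Sum>(i,j)\<in>{(i,j). i<j}. mu2 * M i j (v s)) has_field_derivative (\<Sum>(i,j)\<in>{(i,j). i<j}. mu2 * Md i j t)) (at t)"
    proof (rule DERIV_sum)
      fix n :: "'n \<times> 'n" assume "n \<in> {(i,j). i<j}"
      then obtain i j where n: "n = (i,j)" "i < j" by auto
      show "((\<lambda>s. case n of (i,j) \<Rightarrow> mu2 * M i j (v s)) has_field_derivative (case n of (i,j) \<Rightarrow> mu2 * Md i j t)) (at t)"
        using DERIV_cmult[OF dM[OF n(2) tT], of mu2] by (simp add: n)
    qed
    have "Gv = (\<lambda>s. (\<Sum>k\<in>UNIV. mu1 * L k (v s)) + (\<Sum>(i,j)\<in>{(i,j). i<j}. mu2 * M i j (v s)))"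
      by (simp add: Gv_def fun_eq_iff)
    thus ?thesis unfolding Gd_def using DERIV_add[OF d1 d2] by simp
  qed
  define Bf where "Bf t = mu1 * ((t + 1) / (2 * (t - 1))) + mu2 * (\<Sum>(i,j)\<in>{(i,j). i<j}. cc r i j * ((t - inverse t) / (Wq i t - Wq j t)))" for t
  have tG: "t * Gd t = Bf t" if tT: "t \<in> T" for t
  proof -
    have s1: "t * (\<Sum>k\<in>UNIV. mu1 * (gLd k t / gL k t)) = mu1 * ((t + 1) / (2 * (t - 1)))"
    proof -
      have "t * (\<Sum>k\<in>UNIV. mu1 * (gLd k t / gL k t)) = (\<Sum>k\<in>UNIV. mu1 * (t * (gLd k t / gL k t)))"
        by (simp add: sum_distrib_left mult.left_commute)
      also have "\<dots> = (\<Sum>k\<in>UNIV. mu1 * (if k = r then (t + 1) / (2 * (t - 1)) else 0))"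
        by (simp only: tL[OF tT])
      also have "\<dots> = mu1 * ((t + 1) / (2 * (t - 1)))"
        by (simp add: sum_distrib_left[symmetric])
      finally show ?thesis .
    qed
    have s2: "t * (\<Sum>(i,j)\<in>{(i,j). i<j}. mu2 * Md i j t) = mu2 * (\<Sum>(i,j)\<in>{(i,j). i<j}. cc r i j * ((t - inverse t) / (Wq i t - Wq j t)))"
    proof -
      have "t * (\<Sum>(i,j)\<in>{(i,j). i<j}. mu2 * Md i j t) = mu2 * (\<Sum>(i,j)\<in>{(i,j). i<j}. t * Md i j t)"
        by (simp add: sum_distrib_left case_prod_unfold mult.left_commute)
      also have "\<dots> = mu2 * (\<Sum>(i,j)\<in>{(i,j). i<j}. cc r i j * ((t - inverse t) / (Wq i t - Wq j t)))"
        by (simp only: tM[OF tT])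
      finally show ?thesis .
    qed
    show ?thesis unfolding Gd_def Bf_def distrib_left s1 s2 ..
  qed
  have e1: "euler_op r phi (v t) = phi (v t) * Bf t" if tT: "t \<in> T" for t
  proof -
    have vv: "(\<lambda>s. phi (vupd (v t) r s)) = (\<lambda>s. exp (Gv s))"
      by (simp add: fun_eq_iff v_def vupd_vupd phiG[unfolded v_def])
    have vtr: "v t $ r = t" by (simp add: vq qr)
    have "deriv (\<lambda>s. exp (Gv s)) t = exp (Gv t) * Gd t"
      by (rule DERIV_imp_deriv, rule DERIV_chain2[OF DERIV_exp dG[OF tT]])
    hence "euler_op r phi (v t) = t * (exp (Gv t) * Gd t)"
      unfolding euler_op_def pdiff_def vv vtr by simp
    also have "\<dots> = exp (Gv t) * (t * Gd t)" by (simp add: ac_simps)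
    finally show ?thesis unfolding tG[OF tT] phiG .
  qed
  have t00: "t0 \<noteq> 0" "t0 \<noteq> 1" using tnz[OF t0T] by auto
  have Wqt0: "Wq k t0 = ww (vec_nth z) k" for k by (simp add: Wq_def q_def ww_def t0_def)
  have Dnz: "ww (vec_nth z) i - ww (vec_nth z) j \<noteq> 0" if "i < j" for i j
    using nz3[OF z, of i j] that by auto
  define Bfd where "Bfd = (- mu1 * (t0 / (t0 - 1)^2)
        + mu2 * (\<Sum>(i,j)\<in>{(i,j). i<j}. cc r i j * ((t0 + inverse t0) / (ww (vec_nth z) i - ww (vec_nth z) j)
                       - cc r i j * ((t0 - inverse t0)^2 / (ww (vec_nth z) i - ww (vec_nth z) j)^2)))) / t0"
  have dBf: "(Bf has_field_derivative Bfd) (at t0)"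
  proof -
    have dA: "((\<lambda>t. (t + 1) / (2 * (t - 1))) has_field_derivative (- (t0 / (t0 - 1)^2)) / t0) (at t0)"
    proof -
      have "((\<lambda>t. (t + 1) / (2 * (t - 1))) has_field_derivative ((2 * (t0 - 1)) - (t0 + 1) * 2) / (2 * (t0 - 1))^2) (at t0)"
        using t00 by (auto intro!: derivative_eq_intros simp: power2_eq_square)
      moreover have "((2 * (t0 - 1)) - (t0 + 1) * 2) / (2 * (t0 - 1))^2 = (- (t0 / (t0 - 1)^2)) / t0"
      proof -
        have a: "(2 * (t0 - 1)) - (t0 + 1) * 2 = - 4" by (simp add: algebra_simps)
        have b: "(2 * (t0 - 1))^2 = 4 * (t0 - 1)^2" by (simp only: power_mult_distrib) simp
        have c: "(- (t0 / (t0 - 1)^2)) / t0 = - (1 / (t0 - 1)^2)" using t00(1) by simp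
        show ?thesis unfolding a b c by simp
      qed
      ultimately show ?thesis by simp
    qed
    have dP: "((\<lambda>t. \<Sum>(i,j)\<in>{(i,j). i<j}. cc r i j * ((t - inverse t) / (Wq i t - Wq j t))) has_field_derivative
        (\<Sum>(i,j)\<in>{(i,j). i<j}. (cc r i j * ((t0 + inverse t0) / (ww (vec_nth z) i - ww (vec_nth z) j)
                       - cc r i j * ((t0 - inverse t0)^2 / (ww (vec_nth z) i - ww (vec_nth z) j)^2))) / t0)) (at t0)"
    proof (rule DERIV_sum)
      fix n :: "'n \<times> 'n" assume "n \<in> {(i,j). i<j}"
      then obtain i j where n: "n = (i,j)" "i < j" by auto
      have "((\<lambda>t. cc r i j * ((t - inverse t) / (Wq i t - Wq j t))) has_field_derivative
           (cc r i j * ((t0 + inverse t0) / (ww (vec_nth z) i - ww (vec_nth z) j)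
             - cc r i j * ((t0 - inverse t0)^2 / (ww (vec_nth z) i - ww (vec_nth z) j)^2))) / t0) (at t0)"
        by (rule pair_deriv[OF t00(1) Dnz[OF n(2)] dWq[OF t0T, of i] dWq[OF t0T, of j] Wqt0 Wqt0])
           (simp add: cc_def algebra_simps)
      thus "((\<lambda>t. case n of (i,j) \<Rightarrow> cc r i j * ((t - inverse t) / (Wq i t - Wq j t))) has_field_derivative
          (case n of (i,j) \<Rightarrow> (cc r i j * ((t0 + inverse t0) / (ww (vec_nth z) i - ww (vec_nth z) j)
                       - cc r i j * ((t0 - inverse t0)^2 / (ww (vec_nth z) i - ww (vec_nth z) j)^2))) / t0)) (at t0)"
        by (simp add: n)
    qed
    have "Bf = (\<lambda>t. mu1 * ((t + 1) / (2 * (t - 1))) + mu2 * (\<Sum>(i,j)\<in>{(i,j). i<j}. cc r i j * ((t - inverse t) / (Wq i t - Wq j t))))"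
      by (simp add: Bf_def fun_eq_iff)
    moreover have "mu1 * ((- (t0 / (t0 - 1)^2)) / t0) + mu2 * (\<Sum>(i,j)\<in>{(i,j). i<j}. (cc r i j * ((t0 + inverse t0) / (ww (vec_nth z) i - ww (vec_nth z) j)
                       - cc r i j * ((t0 - inverse t0)^2 / (ww (vec_nth z) i - ww (vec_nth z) j)^2))) / t0) = Bfd"
    proof -
      have sd: "(\<Sum>(i,j)\<in>{(i,j). i<j}. (cc r i j * ((t0 + inverse t0) / (ww (vec_nth z) i - ww (vec_nth z) j)
                       - cc r i j * ((t0 - inverse t0)^2 / (ww (vec_nth z) i - ww (vec_nth z) j)^2))) / t0)
          = (\<Sum>(i,j)\<in>{(i,j). i<j}. cc r i j * ((t0 + inverse t0) / (ww (vec_nth z) i - ww (vec_nth z) j)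
                       - cc r i j * ((t0 - inverse t0)^2 / (ww (vec_nth z) i - ww (vec_nth z) j)^2))) / t0"
        by (simp only: sum_divide_distrib case_prod_unfold)
      show ?thesis unfolding Bfd_def sd by (rule comb_div)
    qed
    ultimately show ?thesis using DERIV_add[OF DERIV_cmult[OF dA, of mu1] DERIV_cmult[OF dP, of mu2]] by simp
  qed
  have ev2: "\<forall>\<^sub>F t in nhds t0. euler_op r phi (vupd z r t) = phi (v t) * Bf t"
    using evT[OF t0T] by eventually_elim (simp add: e1 v_def[symmetric])
  have dpsi: "((\<lambda>t. phi (v t)) has_field_derivative phi z * Gd t0) (at t0)"
  proof -
    have "(\<lambda>t. phi (v t)) = (\<lambda>t. exp (Gv t))" by (simp add: phiG)
    moreover have "exp (Gv t0) = phi z" using phiG[of t0] vt0 by simp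
    ultimately show ?thesis using DERIV_chain2[OF DERIV_exp dG[OF t0T]] by simp
  qed
  have "deriv (\<lambda>t. euler_op r phi (vupd z r t)) t0 = deriv (\<lambda>t. phi (v t) * Bf t) t0"
    by (rule deriv_cong_ev[OF ev2 refl])
  also have "\<dots> = phi z * Gd t0 * Bf t0 + Bfd * phi z"
    using DERIV_imp_deriv[OF DERIV_mult[OF dpsi dBf]] vt0 by simp
  finally have dd: "deriv (\<lambda>t. euler_op r phi (vupd z r t)) t0 = phi z * Gd t0 * Bf t0 + Bfd * phi z" .
  have "euler_op r (euler_op r phi) z = t0 * (phi z * Gd t0 * Bf t0 + Bfd * phi z)"
    unfolding euler_op_def[of r "euler_op r phi"] pdiff_def t0_def[symmetric] dd ..
  also have "\<dots> = phi z * ((Bf t0)^2 + t0 * Bfd)"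
    using tG[OF t0T] by (simp add: algebra_simps power2_eq_square)
  also have "Bf t0 = mu1 * ((z $ r + 1) / (2 * (z $ r - 1)))
        + mu2 * (\<Sum>(i,j)\<in>{(i,j). i<j}. cc r i j * ((z $ r - inverse (z $ r)) / (ww (vec_nth z) i - ww (vec_nth z) j)))"
    unfolding Bf_def Wqt0 unfolding t0_def ..
  also have "t0 * Bfd = - mu1 * (z $ r / (z $ r - 1)^2)
        + mu2 * (\<Sum>(i,j)\<in>{(i,j). i<j}. cc r i j * ((z $ r + inverse (z $ r)) / (ww (vec_nth z) i - ww (vec_nth z) j)
                       - cc r i j * ((z $ r - inverse (z $ r))^2 / (ww (vec_nth z) i - ww (vec_nth z) j)^2)))"
    unfolding Bfd_def using t00(1) by (simp add: t0_def)
  finally show ?thesis .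
qed

lemma fin_aux: "E = a * s \<Longrightarrow> s + p = c \<Longrightarrow> E + p * a = c * (a::complex)"
proof -
  assume h: "E = a * s" "s + p = c"
  have "E + p * a = (s + p) * a" using h(1) by (simp add: algebra_simps)
  thus ?thesis using h(2) by simp
qed

theorem theorem6p5:
  fixes mu1 mu2 :: complex
    and U :: "(complex^('n::{finite,linorder})) set"
    and Lz :: "'n \<Rightarrow> complex^('n::{finite,linorder}) \<Rightarrow> complex"
    and L :: "'n \<Rightarrow> complex^('n::{finite,linorder}) \<Rightarrow> complex"
    and M :: "'n \<Rightarrow> 'n \<Rightarrow> complex^('n::{finite,linorder}) \<Rightarrow> complex"
    and phi :: "complex^('n::{finite,linorder}) \<Rightarrow> complex"
  assumes "open U"
    and "\<And>r. continuous_on U (Lz r)"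
    and "\<And>r z. z \<in> U \<Longrightarrow> exp (Lz r z) = z $ r"
    and "\<And>r. continuous_on U (L r)"
    and "\<And>r z. z \<in> U \<Longrightarrow>
           exp (L r z) = branch_pow (Lz r z) (1/2) - branch_pow (Lz r z) (-1/2)"
    and "\<And>i j. i < j \<Longrightarrow> continuous_on U (M i j)"
    and "\<And>i j z. i < j \<Longrightarrow> z \<in> U \<Longrightarrow>
           exp (M i j z) = z $ i + inverse (z $ i) - z $ j - inverse (z $ j)"
    and "\<And>z. phi z = (\<Prod>r\<in>UNIV. branch_pow (L r z) mu1) *
                      (\<Prod>(i, j)\<in>{(i, j). i < j}. branch_pow (M i j z) mu2)"
    and "z \<in> U"
  shows "(\<Sum>r\<in>UNIV. euler_op r (euler_op r phi) z)
         + (mu1 * (1 - mu1) * (\<Sum>r\<in>UNIV. z $ r / (z $ r - 1)^2)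
            + 2 * mu2 * (1 - mu2) *
              ((\<Sum>(i, j)\<in>{(i, j). i < j}. z $ i * z $ j / (z $ i - z $ j)^2)
               + (\<Sum>(i, j)\<in>{(i, j). i < j}. z $ i * z $ j / (z $ i * z $ j - 1)^2))) * phi z
       = (of_nat CARD('n) * mu1^2 / 4
          + of_nat (CARD('n) * (CARD('n) - 1)) / 2 * mu1 * mu2
          + of_nat (CARD('n) * (CARD('n) - 1) * (2 * CARD('n) - 1)) * mu2^2 / 6) * phi z"
  proof -
  have x0: "z $ k \<noteq> 0" for k
    apply (rule nzU(1)[where U=U and Lz=Lz and L=L and M=M])
    apply (rule assms(3), assumption)
    apply (rule assms(5), assumption)
    apply (rule assms(7), assumption, assumption)
    by (rule assms(9))
  have x1: "z $ k \<noteq> 1" for k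
    apply (rule nzU(2)[where U=U and Lz=Lz and L=L and M=M])
    apply (rule assms(3), assumption)
    apply (rule assms(5), assumption)
    apply (rule assms(7), assumption, assumption)
    by (rule assms(9))
  have wd: "ww (vec_nth z) i \<noteq> ww (vec_nth z) j" if "i \<noteq> j" for i j
    apply (rule nzU(3)[where U=U and Lz=Lz and L=L and M=M])
    apply (rule assms(3), assumption)
    apply (rule assms(5), assumption)
    apply (rule assms(7), assumption, assumption)
    apply (rule assms(9))
    by (rule that)
  have sl: "euler_op r (euler_op r phi) z = phi z *
     ((mu1 * ((z $ r + 1) / (2 * (z $ r - 1)))
        + mu2 * (\<Sum>(i,j)\<in>{(i,j). i<j}. cc r i j * ((z $ r - inverse (z $ r)) / (ww (vec_nth z) i - ww (vec_nth z) j))))^2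
      + (- mu1 * (z $ r / (z $ r - 1)^2)
        + mu2 * (\<Sum>(i,j)\<in>{(i,j). i<j}. cc r i j * ((z $ r + inverse (z $ r)) / (ww (vec_nth z) i - ww (vec_nth z) j)
                       - cc r i j * ((z $ r - inverse (z $ r))^2 / (ww (vec_nth z) i - ww (vec_nth z) j)^2)))))" for r
    apply (rule slice[where U=U and Lz=Lz and L=L and M=M and phi=phi])
    apply (rule assms(1))
    apply (rule assms(2))
    apply (rule assms(3), assumption)
    apply (rule assms(4))
    apply (rule assms(5), assumption)
    apply (rule assms(6), assumption)
    apply (rule assms(7), assumption, assumption)
    apply (rule assms(8))
    by (rule assms(9))
  note A = alg_main[of "vec_nth z" mu1 mu2, OF x0 x1 wd]
  note S = trans[OF sum.cong[OF refl sl] sum_distrib_left[symmetric]]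
  show ?thesis by (rule fin_aux[OF S A])
qed

end
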